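(* Let $F\neq\mathbb{RP}^2$ be a surface and $D$ a link diagram in $F$ with $n$ crossings ordered $v_1,\dots,v_n$. Let $d^+(S)=\sum_v(-1)^{t^+(S,v)}d_v(S)$, where $t^+(S,v)$ is the number of $+1$ markers of $S$ at crossings greater than $v$. For an enhanced state $S$ let $u(S)$ be the number of crossings $v_i$ with marker $+1$ in $S$ such that $i\equiv n+1\pmod 2$, and set $g(S)=(-1)^{u(S)}S$. Then $g$ induces an isomorphism of chain complexes $g:(C(D),d)\to(C(D),d^+)$.
   Context: A link diagram in $F$ is a finite collection of generically immersed closed curves with finitely many crossings with over/under information. The $(+1)$-/$(-1)$-smoothing of a crossing is the one with coefficient $A$/$A^{-1}$ in $L_p=AL_0+A^{-1}L_\infty$. An enhanced state assigns markers $\pm1$ to crossings and labels $\pm$ to the resulting circles. A circle is trivial if it bounds a disk in $F$, bounding if it bounds a disk or a Möbius band; $\mathcal C(F)$ = unoriented unbounding simple closed curves in $F$ up to homotopy. $I(S)=\#\{+1\}-\#\{-1\}$ markers, $\tau(S)=\#$(trivial circles labeled $+$)$-\#$(trivial labeled $-$), $J=I+2\tau$, $\Psi(S)=\sum\varepsilon_k\gamma_k$ over unbounding circles with labels $\varepsilon_k$. $C_{ijs}(D)$ is free abelian on enhanced states with $(I,J,\Psi)=(i,j,s)$, $C(D)=\bigoplus C_{ijs}(D)$. $[S:S']_v=1$ iff (a) $v$ has marker $+1$ in $S$ and $-1$ in $S'$, (b) other markers agree, (c) circles common to $S,S'$ have equal labels, (d) $J(S)=J(S')$, $\Psi(S)=\Psi(S')$;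 else $0$. $d_v(S)=\sum_{S'}[S:S']_vS'$; $t(S,v)$ = number of $-1$ markers of $S$ at crossings greater than $v$; $d(S)=\sum_v(-1)^{t(S,v)}d_v(S)$. *)

theory Defs
  imports Main
begin

text \<open>Combinatorial model of the enhanced-state complex of a link diagram D with n crossings
  v_1,...,v_n (identified with 1..n, ordered by the natural order) on a surface F.
  The topological input of (F,D) is abstracted into:
   circ P  : the (finite) set of circles of the smoothing in which exactly the crossings in
             P have marker +1 and the crossings in {1..n}-P have marker -1
             (circles are elements of an abstract type 'c; a circle common to two states is
             an element of both circle sets);
   triv c  : c is trivial (bounds a disk in F);
   bnd c   : c is bounding (bounds a disk or a Moebius band);
   cls c   : the class of c in C(F) (unoriented homotopy class), in an abstract type 'h.\<close>

type_synonym ('c) estate = "nat set \<times> ('c \<Rightarrow> int)"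

definition enh_states :: "nat \<Rightarrow> (nat set \<Rightarrow> 'c set) \<Rightarrow> 'c estate set" where
  "enh_states n circ = {(P, lab). P \<subseteq> {1..n} \<and> (\<forall>c\<in>circ P. lab c = 1 \<or> lab c = -1)
                                  \<and> (\<forall>c. c \<notin> circ P \<longrightarrow> lab c = 0)}"

definition I_idx :: "nat \<Rightarrow> 'c estate \<Rightarrow> int" where
  "I_idx n S = int (card (fst S)) - int (n - card (fst S))"

definition tau_idx :: "(nat set \<Rightarrow> 'c set) \<Rightarrow> ('c \<Rightarrow> bool) \<Rightarrow> 'c estate \<Rightarrow> int" where
  "tau_idx circ triv S = (\<Sum>c\<in>{c\<in>circ (fst S). triv c}. snd S c)"

definition J_idx :: "nat \<Rightarrow> (nat set \<Rightarrow> 'c set) \<Rightarrow> ('c \<Rightarrow> bool) \<Rightarrow> 'c estate \<Rightarrow> int" where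
  "J_idx n circ triv S = I_idx n S + 2 * tau_idx circ triv S"

text \<open>Psi(S) = sum of eps_k gamma_k over unbounding circles, as an element of the free abelian
  group on C(F), represented by its coefficient function.\<close>
definition Psi_idx :: "(nat set \<Rightarrow> 'c set) \<Rightarrow> ('c \<Rightarrow> bool) \<Rightarrow> ('c \<Rightarrow> 'h) \<Rightarrow> 'c estate \<Rightarrow> 'h \<Rightarrow> int" where
  "Psi_idx circ bnd cls S = (\<lambda>h. \<Sum>c\<in>{c\<in>circ (fst S). \<not> bnd c \<and> cls c = h}. snd S c)"

text \<open>The incidence number [S:S']_v (as a boolean: true iff it equals 1).\<close>
definition incid :: "nat \<Rightarrow> (nat set \<Rightarrow> 'c set) \<Rightarrow> ('c \<Rightarrow> bool) \<Rightarrow> ('c \<Rightarrow> bool) \<Rightarrow> ('c \<Rightarrow> 'h)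
                     \<Rightarrow> nat \<Rightarrow> 'c estate \<Rightarrow> 'c estate \<Rightarrow> bool" where
  "incid n circ triv bnd cls v S S' \<longleftrightarrow>
     v \<in> fst S \<and> v \<notin> fst S' \<and> fst S - {v} = fst S' - {v}
     \<and> (\<forall>c \<in> circ (fst S) \<inter> circ (fst S'). snd S c = snd S' c)
     \<and> J_idx n circ triv S = J_idx n circ triv S'
     \<and> Psi_idx circ bnd cls S = Psi_idx circ bnd cls S'"

definition t_neg :: "nat \<Rightarrow> 'c estate \<Rightarrow> nat \<Rightarrow> nat" where
  "t_neg n S v = card {w\<in>{1..n}. v < w \<and> w \<notin> fst S}"

definition t_pos :: "nat \<Rightarrow> 'c estate \<Rightarrow> nat \<Rightarrow> nat" where
  "t_pos n S v = card {w\<in>{1..n}. v < w \<and> w \<in> fst S}"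

text \<open>Chains: elements of the free abelian group C(D) on the enhanced states, as coefficient
  functions vanishing outside the (finite) set of enhanced states.\<close>
definition chains :: "nat \<Rightarrow> (nat set \<Rightarrow> 'c set) \<Rightarrow> ('c estate \<Rightarrow> int) set" where
  "chains n circ = {x. \<forall>S. S \<notin> enh_states n circ \<longrightarrow> x S = 0}"

text \<open>The differential sum_v (-1)^{tt(S,v)} d_v(S), extended linearly; with tt = t_neg this is d,
  with tt = t_pos this is d^+.\<close>
definition diff :: "nat \<Rightarrow> (nat set \<Rightarrow> 'c set) \<Rightarrow> ('c \<Rightarrow> bool) \<Rightarrow> ('c \<Rightarrow> bool) \<Rightarrow> ('c \<Rightarrow> 'h)
                    \<Rightarrow> ('c estate \<Rightarrow> nat \<Rightarrow> nat) \<Rightarrow> ('c estate \<Rightarrow> int) \<Rightarrow> ('c estate \<Rightarrow> int)" where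
  "diff n circ triv bnd cls tt x = (\<lambda>S'.
     if S' \<in> enh_states n circ then
       (\<Sum>S\<in>enh_states n circ. \<Sum>v\<in>{1..n}.
          (if incid n circ triv bnd cls v S S' then (-1) ^ tt S v * x S else 0))
     else 0)"

definition u_cnt :: "nat \<Rightarrow> 'c estate \<Rightarrow> nat" where
  "u_cnt n S = card {i\<in>fst S. i \<in> {1..n} \<and> i mod 2 = (n + 1) mod 2}"

definition g_map :: "nat \<Rightarrow> ('c estate \<Rightarrow> int) \<Rightarrow> ('c estate \<Rightarrow> int)" where
  "g_map n x = (\<lambda>S. (-1) ^ u_cnt n S * x S)"

end

theory Submission
  imports Defs
begin

lemma parity_key:
  assumes P: "P \<subseteq> {1..n}" and v: "v \<in> P"
  shows "((-1::int) ^ u_cnt n (P - {v}, l') * (-1) ^ t_neg n (P, l) v)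
       = (-1) ^ t_pos n (P, l) v * (-1) ^ u_cnt n (P, l)"
proof -
  define A where "A = {i\<in>P. i \<in> {1..n} \<and> i mod 2 = (n + 1) mod 2}"
  have "A \<subseteq> {1..n}" unfolding A_def by blast
  then have fA: "finite A" by (rule finite_subset) simp
  have u: "u_cnt n (P, l) = card A" unfolding u_cnt_def A_def by simp
  have Aeq: "{i\<in>P - {v}. i \<in> {1..n} \<and> i mod 2 = (n + 1) mod 2} = A - {v}"
    unfolding A_def by blast
  have u': "u_cnt n (P - {v}, l') = card (A - {v})" unfolding u_cnt_def
    using Aeq by (simp only: fst_conv)
  have vn: "v \<in> {1..n}" using P v by blast
  have sp: "{w\<in>{1..n}. v < w} = {w\<in>{1..n}. v < w \<and> w \<notin> P} \<union> {w\<in>{1..n}. v < w \<and> w \<in> P}"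
    by blast
  have "card ({w\<in>{1..n}. v < w \<and> w \<notin> P} \<union> {w\<in>{1..n}. v < w \<and> w \<in> P}) = card {w\<in>{1..n}. v < w \<and> w \<notin> P} + card {w\<in>{1..n}. v < w \<and> w \<in> P}"
  proof (rule card_Un_disjoint)
    show "finite {w\<in>{1..n}. v < w \<and> w \<notin> P}" by (rule finite_subset[of _ "{1..n}"]) auto
    show "finite {w\<in>{1..n}. v < w \<and> w \<in> P}" by (rule finite_subset[of _ "{1..n}"]) auto
  qed auto
  then have "card {w\<in>{1..n}. v < w} = t_neg n (P, l) v + t_pos n (P, l) v"
    unfolding t_neg_def t_pos_def fst_conv sp[symmetric] .
  moreover have "{w\<in>{1..n}. v < w} = {v<..n}" using vn by fastforce
  ultimately have tt: "t_neg n (P, l) v + t_pos n (P, l) v = n - v" by simp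
  have cA: "card A = card (A - {v}) + (if v \<in> A then 1 else 0)"
  proof (cases "v \<in> A")
    case True
    have "card A = Suc (card (A - {v}))" by (rule card.remove[OF fA True])
    then show ?thesis using True by (simp only: if_True Suc_eq_plus1)
  next
    case False
    then have "A - {v} = A" by blast
    then show ?thesis using False by (simp only: if_False add_0_right)
  qed
  have vA1: "v \<in> A \<longleftrightarrow> v mod 2 = (n + 1) mod 2" using vn v unfolding A_def by blast
  have vle: "v \<le> n" using vn by simp
  have vA2: "v mod 2 = (n + 1) mod 2 \<longleftrightarrow> odd (n - v)" using vle by presburger
  have vA: "v \<in> A \<longleftrightarrow> odd (n - v)" using vA1 vA2 by blast
  define a where "a = u_cnt n (P - {v}, l')"
  define b where "b = t_neg n (P, l) v"
  define c where "c = t_pos n (P, l) v"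
  define d where "d = u_cnt n (P, l)"
  have bc: "b + c = n - v" using tt unfolding b_def c_def .
  have da: "d = a + (if odd (n - v) then 1 else 0)" using u u' cA vA unfolding a_def d_def by simp
  have par: "even (a + b) \<longleftrightarrow> even (c + d)"
  proof (cases "odd (n - v)")
    case True
    then have "d = a + 1" using da by simp
    then show ?thesis using bc True by presburger
  next
    case False
    then have "d = a" using da by simp
    then show ?thesis using bc False by presburger
  qed
  have "(-1::int) ^ (a + b) = (-1) ^ (c + d)"
  proof (cases "even (a + b)")
    case True
    then show ?thesis using par by simp
  next
    case False
    then show ?thesis using par by simp
  qed
  then have "(-1::int) ^ a * (-1) ^ b = (-1) ^ c * (-1) ^ d" by (simp only: power_add)
  then show ?thesis by (simp only: a_def b_def c_def d_def)
qed

lemma g_inv: "g_map n (g_map n x) = x"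
  unfolding g_map_def by (simp add: power_mult_distrib[symmetric] mult.assoc[symmetric] flip: power_add)

theorem proposition9p2:
  fixes n :: nat
    and circ :: "nat set \<Rightarrow> 'c set"
    and triv bnd :: "'c \<Rightarrow> bool"
    and cls :: "'c \<Rightarrow> 'h"
  assumes "\<forall>P. P \<subseteq> {1..n} \<longrightarrow> finite (circ P)"
    and "\<forall>c. triv c \<longrightarrow> bnd c"
  shows "bij_betw (g_map n) (chains n circ) (chains n circ)
     \<and> (\<forall>x y :: 'c estate \<Rightarrow> int. g_map n (\<lambda>S. x S + y S) = (\<lambda>S. g_map n x S + g_map n y S))
     \<and> (\<forall>x\<in>chains n circ.
          g_map n (diff n circ triv bnd cls (t_neg n) x)
          = diff n circ triv bnd cls (t_pos n) (g_map n x))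
     \<and> (\<forall>x\<in>chains n circ. \<forall>i j s.
          (\<forall>S. x S \<noteq> 0 \<longrightarrow> I_idx n S = i \<and> J_idx n circ triv S = j \<and> Psi_idx circ bnd cls S = s)
          \<longrightarrow> (\<forall>S. g_map n x S \<noteq> 0 \<longrightarrow> I_idx n S = i \<and> J_idx n circ triv S = j \<and> Psi_idx circ bnd cls S = s))"
proof (intro conjI)
  have cl: "g_map n x \<in> chains n circ" if "x \<in> chains n circ" for x
    using that unfolding chains_def g_map_def by auto
  show "bij_betw (g_map n) (chains n circ) (chains n circ)"
  proof (rule bij_betw_byWitness[where f' = "g_map n"])
    show "\<forall>a\<in>chains n circ. g_map n (g_map n a) = a" by (simp add: g_inv)
  qed (auto simp: g_inv cl)
  show "\<forall>x y :: 'c estate \<Rightarrow> int. g_map n (\<lambda>S. x S + y S) = (\<lambda>S. g_map n x S + g_map n y S)"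
    unfolding g_map_def by (simp add: algebra_simps)
  show "\<forall>x\<in>chains n circ. \<forall>i j s.
          (\<forall>S. x S \<noteq> 0 \<longrightarrow> I_idx n S = i \<and> J_idx n circ triv S = j \<and> Psi_idx circ bnd cls S = s)
          \<longrightarrow> (\<forall>S. g_map n x S \<noteq> 0 \<longrightarrow> I_idx n S = i \<and> J_idx n circ triv S = j \<and> Psi_idx circ bnd cls S = s)"
    unfolding g_map_def by auto
  show "\<forall>x\<in>chains n circ.
          g_map n (diff n circ triv bnd cls (t_neg n) x)
          = diff n circ triv bnd cls (t_pos n) (g_map n x)"
  proof (intro ballI ext)
    fix x S'
    show "g_map n (diff n circ triv bnd cls (t_neg n) x) S'
          = diff n circ triv bnd cls (t_pos n) (g_map n x) S'"
    proof (cases "S' \<in> enh_states n circ")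
      case False then show ?thesis unfolding g_map_def diff_def by simp
    next
      case True
      have hterm: "(-1::int) ^ u_cnt n S' *
            (if incid n circ triv bnd cls v S S' then (-1) ^ t_neg n S v * x S else 0)
          = (if incid n circ triv bnd cls v S S' then (-1) ^ t_pos n S v * ((-1) ^ u_cnt n S * x S) else 0)"
        if S: "S \<in> enh_states n circ" for S v
      proof (cases "incid n circ triv bnd cls v S S'")
        case False then show ?thesis by simp
      next
        case inc: True
        obtain P l where Pl: "S = (P, l)" by (cases S)
        obtain P' l' where Pl': "S' = (P', l')" by (cases S')
        have P: "P \<subseteq> {1..n}" using S Pl unfolding enh_states_def by auto
        have P': "P' \<subseteq> {1..n}" using True Pl' unfolding enh_states_def by auto
        have v: "v \<in> P" and vP': "v \<notin> P'" and eq: "P - {v} = P' - {v}"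
          using inc Pl Pl' unfolding incid_def by auto
        have "P' = P - {v}" using eq vP' by blast
        then have "(-1::int) ^ u_cnt n S' * (-1) ^ t_neg n S v = (-1) ^ t_pos n S v * (-1) ^ u_cnt n S"
          using parity_key[OF P v] Pl Pl' by simp
        then have "(-1::int) ^ u_cnt n S' * ((-1) ^ t_neg n S v * x S) = (-1) ^ t_pos n S v * ((-1) ^ u_cnt n S * x S)"
          unfolding mult.assoc[symmetric] by (rule arg_cong[where f="\<lambda>z. z * x S"])
        then show ?thesis using inc by (simp only: if_True)
      qed
      show ?thesis
      proof -
        have "g_map n (diff n circ triv bnd cls (t_neg n) x) S'
          = (-1::int) ^ u_cnt n S' * (\<Sum>S\<in>enh_states n circ. \<Sum>v\<in>{1..n}.
              (if incid n circ triv bnd cls v S S' then (-1) ^ t_neg n S v * x S else 0))"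
          unfolding g_map_def diff_def using True by (simp only: if_True)
        also have "\<dots> = (\<Sum>S\<in>enh_states n circ. \<Sum>v\<in>{1..n}. (-1::int) ^ u_cnt n S' *
              (if incid n circ triv bnd cls v S S' then (-1) ^ t_neg n S v * x S else 0))"
          by (simp only: sum_distrib_left)
        also have "\<dots> = (\<Sum>S\<in>enh_states n circ. \<Sum>v\<in>{1..n}.
              (if incid n circ triv bnd cls v S S' then (-1) ^ t_pos n S v * ((-1) ^ u_cnt n S * x S) else 0))"
          by (rule sum.cong[OF refl], rule sum.cong[OF refl], erule hterm)
        also have "\<dots> = diff n circ triv bnd cls (t_pos n) (g_map n x) S'"
          unfolding g_map_def diff_def using True by (simp only: if_True)
        finally show ?thesis .
      qed
    qed
  qed
qed

end
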